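(* Let $G=(V,E)$ be a finite, undirected, connected, unweighted graph, let $R\subseteq V$ be a set of landmarks, and let $\mathcal{L}=(M,L)$ be the labelling scheme of $G$ with respect to $R$ (defined in the context). For any two vertices $u,v\in V$, define $$d^{\top}_{uv}=\min\{\delta_{ur}+d_M(r,r')+\delta_{r'v} \mid (r,\delta_{ur})\in L(u),\ (r',\delta_{r'v})\in L(v)\},$$ with the convention $\min\emptyset=+\infty$. Then $d^{\top}_{uv}\geq d_G(u,v)$.
   Context: $d_G(x,y)$ denotes the shortest-path distance (number of edges) between $x$ and $y$ in $G$, and $P_{xy}$ denotes the set of all shortest paths between $x$ and $y$ in $G$; $V(p)$ is the vertex set of a path $p$. The meta-graph is $M=(R,E_R,\sigma)$, the edge-weighted graph on vertex set $R$ in which, for distinct $r,r'\in R$, $\{r,r'\}\in E_R$ iff at least one shortest path in $G$ between $r$ and $r'$ contains no vertex of $R$ other than $r$ and $r'$, and such an edge has weight $\sigma(r,r')=d_G(r,r')$. $d_M(r,r')$ denotes the weighted shortest-path distance between $r$ and $r'$ in $M$ (with $d_M(r,r)=0$ and $d_M(r,r')=+\infty$ if no path exists). The path labelling $L$ assigns to each $u\in V\setminus R$ the label $L(u)=\{(r,\delta_{ur}) \mid r\in R,\ \delta_{ur}=d_G(u,r),\ \exists p\in P_{ur}\text{ with } V(p)\cap R=\{r\}\}$, and to each landmark $u\in R$ the empty label $L(u)=\emptyset$. The pair $\mathcal{L}=(M,L)$ is the labelling scheme. *)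

theory Defs
  imports Main "HOL-Library.Extended_Nat"
begin

definition walk :: "'a set \<Rightarrow> ('a \<times> 'a) set \<Rightarrow> 'a list \<Rightarrow> 'a \<Rightarrow> 'a \<Rightarrow> bool" where
  "walk V E p x y \<longleftrightarrow> p \<noteq> [] \<and> hd p = x \<and> last p = y \<and> set p \<subseteq> V
     \<and> (\<forall>i. Suc i < length p \<longrightarrow> (p ! i, p ! Suc i) \<in> E)"

definition plen :: "'a list \<Rightarrow> nat" where
  "plen p = length p - 1"

definition finite_simple_graph :: "'a set \<Rightarrow> ('a \<times> 'a) set \<Rightarrow> bool" where
  "finite_simple_graph V E \<longleftrightarrow> finite V \<and> E \<subseteq> V \<times> V \<and> sym E \<and> irrefl E"

definition connected_graph :: "'a set \<Rightarrow> ('a \<times> 'a) set \<Rightarrow> bool" where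
  "connected_graph V E \<longleftrightarrow> (\<forall>x\<in>V. \<forall>y\<in>V. \<exists>p. walk V E p x y)"

definition gdist :: "'a set \<Rightarrow> ('a \<times> 'a) set \<Rightarrow> 'a \<Rightarrow> 'a \<Rightarrow> nat" where
  "gdist V E x y = (LEAST n. \<exists>p. walk V E p x y \<and> plen p = n)"

definition shortest_paths :: "'a set \<Rightarrow> ('a \<times> 'a) set \<Rightarrow> 'a \<Rightarrow> 'a \<Rightarrow> 'a list set" where
  "shortest_paths V E x y = {p. walk V E p x y \<and> plen p = gdist V E x y}"

definition meta_edge :: "'a set \<Rightarrow> ('a \<times> 'a) set \<Rightarrow> 'a set \<Rightarrow> 'a \<Rightarrow> 'a \<Rightarrow> bool" where
  "meta_edge V E R r r' \<longleftrightarrow> r \<in> R \<and> r' \<in> R \<and> r \<noteq> r'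
     \<and> (\<exists>p\<in>shortest_paths V E r r'. set p \<inter> R \<subseteq> {r, r'})"

definition meta_weight :: "'a set \<Rightarrow> ('a \<times> 'a) set \<Rightarrow> 'a \<Rightarrow> 'a \<Rightarrow> nat" where
  "meta_weight V E r r' = gdist V E r r'"

definition meta_walk :: "'a set \<Rightarrow> ('a \<times> 'a) set \<Rightarrow> 'a set \<Rightarrow> 'a list \<Rightarrow> 'a \<Rightarrow> 'a \<Rightarrow> bool" where
  "meta_walk V E R q r r' \<longleftrightarrow> q \<noteq> [] \<and> hd q = r \<and> last q = r' \<and> set q \<subseteq> R
     \<and> (\<forall>i. Suc i < length q \<longrightarrow> meta_edge V E R (q ! i) (q ! Suc i))"

definition meta_walk_weight :: "'a set \<Rightarrow> ('a \<times> 'a) set \<Rightarrow> 'a list \<Rightarrow> nat" where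
  "meta_walk_weight V E q = (\<Sum>i<length q - 1. meta_weight V E (q ! i) (q ! Suc i))"

(* d_M(r,r'): weighted shortest-path distance in M; Inf {} = \<infinity> *)
definition meta_dist :: "'a set \<Rightarrow> ('a \<times> 'a) set \<Rightarrow> 'a set \<Rightarrow> 'a \<Rightarrow> 'a \<Rightarrow> enat" where
  "meta_dist V E R r r' = Inf {enat (meta_walk_weight V E q) | q. meta_walk V E R q r r'}"

definition plabel :: "'a set \<Rightarrow> ('a \<times> 'a) set \<Rightarrow> 'a set \<Rightarrow> 'a \<Rightarrow> ('a \<times> nat) set" where
  "plabel V E R u = (if u \<in> R then {} else
     {(r, d). r \<in> R \<and> d = gdist V E u r \<and> (\<exists>p\<in>shortest_paths V E u r. set p \<inter> R = {r})})"

(* d^top_{uv}, with min {} = \<infinity> *)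
definition dtop :: "'a set \<Rightarrow> ('a \<times> 'a) set \<Rightarrow> 'a set \<Rightarrow> 'a \<Rightarrow> 'a \<Rightarrow> enat" where
  "dtop V E R u v = Inf {enat du + meta_dist V E R r r' + enat dv | r du r' dv.
      (r, du) \<in> plabel V E R u \<and> (r', dv) \<in> plabel V E R v}"

end

theory Submission
  imports Defs
begin

lemma walk_app:
  assumes "walk V E p x y" "walk V E q y z"
  shows "walk V E (p @ tl q) x z \<and> plen (p @ tl q) = plen p + plen q"
proof -
  have p: "p \<noteq> []" "hd p = x" "last p = y" "set p \<subseteq> V"
    "\<And>i. Suc i < length p \<Longrightarrow> (p ! i, p ! Suc i) \<in> E" using assms(1) unfolding walk_def by auto
  have q: "q \<noteq> []" "hd q = y" "last q = z" "set q \<subseteq> V"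
    "\<And>i. Suc i < length q \<Longrightarrow> (q ! i, q ! Suc i) \<in> E" using assms(2) unfolding walk_def by auto
  obtain a q' where qq: "q = a # q'" using q(1) by (cases q) auto
  have a: "a = y" using q(2) qq by simp
  have last: "last (p @ q') = z"
    using q(3) qq a p(1,3) by (cases "q' = []") auto
  have edges: "(( p @ q') ! i, (p @ q') ! Suc i) \<in> E" if "Suc i < length (p @ q')" for i
  proof (cases "Suc i < length p")
    case True then show ?thesis using p(5)[OF True] by (simp add: nth_append)
  next
    case False
    show ?thesis
    proof (cases "i < length p")
      case True
      then have "i = length p - 1" using False by simp
      then have "(p @ q') ! i = y" using p(1,3) by (simp add: nth_append last_conv_nth)
      moreover have "(p @ q') ! Suc i = q ! 1" using \<open>i = length p - 1\<close> p(1) qq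
        by (simp add: nth_append)
      moreover have "Suc 0 < length q" using that \<open>i = length p - 1\<close> qq p(1) by simp
      ultimately show ?thesis using q(5)[of 0] q(2) qq a by simp
    next
      case F2: False
      define j where "j = i - length p"
      have "i = length p + j" using F2 j_def by simp
      then show ?thesis using q(5)[of "Suc j"] that qq by (simp add: nth_append)
    qed
  qed
  have "walk V E (p @ q') x z" using p q qq a last edges unfolding walk_def by auto
  moreover have "plen (p @ q') = plen p + plen q" using p(1) qq unfolding plen_def by (cases p) auto
  ultimately show ?thesis using qq by simp
qed

lemma walk_rev:
  assumes "sym E" "walk V E p x y"
  shows "walk V E (rev p) y x \<and> plen (rev p) = plen p"
proof -
  have "(rev p ! i, rev p ! Suc i) \<in> E" if "Suc i < length p" for i
  proof -
    have "(p ! (length p - Suc (Suc i)), p ! Suc (length p - Suc (Suc i))) \<in> E"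
      using assms(2) that unfolding walk_def by auto
    moreover have "Suc (length p - Suc (Suc i)) = length p - Suc i" using that by simp
    ultimately have "(p ! (length p - Suc (Suc i)), p ! (length p - Suc i)) \<in> E" by simp
    then show ?thesis using assms(1) that by (simp add: rev_nth sym_def)
  qed
  then show ?thesis using assms(2) unfolding walk_def plen_def
    by (auto simp: hd_rev last_rev)
qed

lemma gdist_le: "walk V E p x y \<Longrightarrow> gdist V E x y \<le> plen p"
  unfolding gdist_def by (rule Least_le) auto

lemma gdist_ex: "walk V E p x y \<Longrightarrow> \<exists>q. walk V E q x y \<and> plen q = gdist V E x y"
  unfolding gdist_def by (rule LeastI_ex) auto

lemma conn_walk: "connected_graph V E \<Longrightarrow> x \<in> V \<Longrightarrow> y \<in> V \<Longrightarrow> \<exists>p. walk V E p x y"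
  unfolding connected_graph_def by blast

lemma gdist_tri:
  assumes "connected_graph V E" "x \<in> V" "y \<in> V" "z \<in> V"
  shows "gdist V E x z \<le> gdist V E x y + gdist V E y z"
proof -
  obtain p0 where p0: "walk V E p0 x y" using conn_walk[OF assms(1,2,3)] by (elim exE)
  obtain p where p: "walk V E p x y" "plen p = gdist V E x y" using gdist_ex[OF p0] by (elim exE conjE)
  obtain q0 where q0: "walk V E q0 y z" using conn_walk[OF assms(1,3,4)] by (elim exE)
  obtain q where q: "walk V E q y z" "plen q = gdist V E y z" using gdist_ex[OF q0] by (elim exE conjE)
  have w: "walk V E (p @ tl q) x z" and l: "plen (p @ tl q) = plen p + plen q"
    using walk_app[OF p(1) q(1)] by simp_all
  have "gdist V E x z \<le> plen (p @ tl q)" by (rule gdist_le[OF w])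
  then show ?thesis using l p(2) q(2) by simp
qed

lemma gdist_sym:
  assumes "sym E" "connected_graph V E" "x \<in> V" "y \<in> V"
  shows "gdist V E x y = gdist V E y x"
proof -
  have le: "gdist V E a b \<le> gdist V E b a" if ab: "a \<in> V" "b \<in> V" for a b
  proof -
    obtain p0 where p0: "walk V E p0 b a" using conn_walk[OF assms(2) ab(2,1)] by (elim exE)
    obtain p where p: "walk V E p b a" "plen p = gdist V E b a" using gdist_ex[OF p0] by (elim exE conjE)
    have w: "walk V E (rev p) a b" and l: "plen (rev p) = plen p" using walk_rev[OF assms(1) p(1)] by simp_all
    have "gdist V E a b \<le> plen (rev p)" by (rule gdist_le[OF w])
    then show ?thesis using l p(2) by simp
  qed
  show ?thesis using le[OF assms(3,4)] le[OF assms(4,3)] by simp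
qed

lemma meta_walk_bound:
  assumes "connected_graph V E" "R \<subseteq> V"
  shows "meta_walk V E R q r r' \<Longrightarrow> gdist V E r r' \<le> meta_walk_weight V E q"
proof (induction q arbitrary: r)
  case Nil then show ?case by (simp add: meta_walk_def)
next
  case (Cons a q)
  show ?case
  proof (cases "q = []")
    case True
    then have "r = r'" "r \<in> V" using Cons.prems assms(2) unfolding meta_walk_def by auto
    moreover have "walk V E [r] r r'" using \<open>r = r'\<close> \<open>r \<in> V\<close> by (simp add: walk_def)
    ultimately show ?thesis using gdist_le[of V E "[r]" r r'] by (simp add: plen_def)
  next
    case False
    then obtain b q' where qq: "q = b # q'" by (cases q) auto
    have mw: "meta_walk V E R q b r'" using Cons.prems qq
      unfolding meta_walk_def by (auto simp: nth_Cons_Suc)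
    have ar: "a = r" using Cons.prems unfolding meta_walk_def by simp
    have sR: "set (a # q) \<subseteq> R" "last (a # q) = r'" using Cons.prems unfolding meta_walk_def by auto
    have "r' \<in> set (a # q)" using sR(2) last_in_set[of "a # q"] by simp
    then have inV: "r \<in> V" "b \<in> V" "r' \<in> V" using sR(1) qq assms(2) ar by auto
    have w: "meta_walk_weight V E (a # q) = gdist V E a b + meta_walk_weight V E q"
      unfolding meta_walk_weight_def meta_weight_def using qq
      by (simp add: sum.lessThan_Suc_shift del: sum.lessThan_Suc)
    have "gdist V E r r' \<le> gdist V E r b + gdist V E b r'"
      using gdist_tri[OF assms(1) inV(1,2,3)] .
    also have "\<dots> \<le> gdist V E r b + meta_walk_weight V E q" using Cons.IH[OF mw] by simp
    finally show ?thesis using w ar by simp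
  qed
qed

theorem mainTheorem1:
  fixes V :: "'a set" and E :: "('a \<times> 'a) set" and R :: "'a set" and u v :: 'a
  assumes "finite_simple_graph V E"
    and "connected_graph V E"
    and "R \<subseteq> V"
    and "u \<in> V" and "v \<in> V"
  shows "dtop V E R u v \<ge> enat (gdist V E u v)"
  unfolding dtop_def
proof (rule Inf_greatest, clarify)
  fix r du r' dv
  assume l1: "(r, du) \<in> plabel V E R u" and l2: "(r', dv) \<in> plabel V E R v"
  have symE: "sym E" using assms(1) unfolding finite_simple_graph_def by simp
  have r: "r \<in> V" "du = gdist V E u r" using l1 assms(3) unfolding plabel_def
    by (auto split: if_splits)
  have r': "r' \<in> V" "dv = gdist V E r' v" using l2 assms(3,5) gdist_sym[OF symE assms(2)]
    unfolding plabel_def by (auto split: if_splits)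
  have md: "enat (gdist V E r r') \<le> meta_dist V E R r r'"
    unfolding meta_dist_def
    by (rule Inf_greatest) (auto intro: meta_walk_bound[OF assms(2,3)])
  have "gdist V E u v \<le> du + gdist V E r r' + dv"
    using gdist_tri[OF assms(2) assms(4) r(1) assms(5)] gdist_tri[OF assms(2) r(1) r'(1) assms(5)] r r'
    by simp
  then have "enat (gdist V E u v) \<le> enat du + enat (gdist V E r r') + enat dv" by simp
  also have "\<dots> \<le> enat du + meta_dist V E R r r' + enat dv"
    using md by (intro add_mono) auto
  finally show "enat (gdist V E u v) \<le> enat du + meta_dist V E R r r' + enat dv" .
qed

end
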